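(* Let $p\ge1$ be an integer and consider the $p$-Pass algorithm run with arbitrary orderings of $V$ in each pass. For every $1\le i\le p$, if $|S_i|<k$ then $f(S_i)\ge\big(1-(\tfrac{p}{p+1})^i\big)\mathrm{OPT}$.
   Context: $V$ is a finite ground set with $|V|=n$; $f:2^V\to\mathbb{R}_{\ge0}$ is monotone, submodular and normalized; $f(e\mid Y)=f(Y\cup\{e\})-f(Y)$. $k\le n$ is a positive integer and $\mathrm{OPT}=\max\{f(S):S\subseteq V,|S|\le k\}$. $p$-Pass algorithm (knows $\mathrm{OPT}$): start with $S=\emptyset$; for $i=1,\dots,p$, make a pass over all elements of $V$ (in some order) and add each element $e$ to $S$ if $|S|<k$ and $f(e\mid S)\ge(\frac{p}{p+1})^i\cdot\frac{\mathrm{OPT}}{k}$; return $S$. $S_i$ denotes the set $S$ after the $i$-th pass ($S_0=\emptyset$) and $k_i=|S_i\setminus S_{i-1}|$. *)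

theory Defs
  imports Complex_Main
begin

definition monotone_set_fun :: "'a set \<Rightarrow> ('a set \<Rightarrow> real) \<Rightarrow> bool" where
  "monotone_set_fun V f \<longleftrightarrow> (\<forall>A B. A \<subseteq> B \<and> B \<subseteq> V \<longrightarrow> f A \<le> f B)"

definition submodular :: "'a set \<Rightarrow> ('a set \<Rightarrow> real) \<Rightarrow> bool" where
  "submodular V f \<longleftrightarrow>
     (\<forall>A B. A \<subseteq> V \<and> B \<subseteq> V \<longrightarrow> f (A \<union> B) + f (A \<inter> B) \<le> f A + f B)"

definition normalized :: "('a set \<Rightarrow> real) \<Rightarrow> bool" where
  "normalized f \<longleftrightarrow> f {} = 0"

definition marginal :: "('a set \<Rightarrow> real) \<Rightarrow> 'a \<Rightarrow> 'a set \<Rightarrow> real" where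
  "marginal f e Y = f (Y \<union> {e}) - f Y"

definition OPT :: "'a set \<Rightarrow> ('a set \<Rightarrow> real) \<Rightarrow> nat \<Rightarrow> real" where
  "OPT V f k = Max {f S | S. S \<subseteq> V \<and> card S \<le> k}"

primrec run_pass :: "('a set \<Rightarrow> real) \<Rightarrow> nat \<Rightarrow> real \<Rightarrow> 'a list \<Rightarrow> 'a set \<Rightarrow> 'a set" where
  "run_pass f k tau [] S = S"
| "run_pass f k tau (e # es) S =
     run_pass f k tau es (if card S < k \<and> marginal f e S \<ge> tau then insert e S else S)"

primrec pass_set :: "('a set \<Rightarrow> real) \<Rightarrow> nat \<Rightarrow> real \<Rightarrow> nat \<Rightarrow> (nat \<Rightarrow> 'a list) \<Rightarrow> nat \<Rightarrow> 'a set" where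
  "pass_set f k opt p ord 0 = {}"
| "pass_set f k opt p ord (Suc i) =
     run_pass f k ((real p / (real p + 1)) ^ Suc i * opt / real k) (ord (Suc i))
       (pass_set f k opt p ord i)"

end

theory Submission
  imports Defs
begin

lemma dr:
  assumes mono: "monotone_set_fun V f" and sub: "submodular V f"
    and "A \<subseteq> B" "B \<subseteq> V" "e \<in> V"
  shows "marginal f e B \<le> marginal f e A"
proof (cases "e \<in> B")
  case True
  have "A \<union> {e} \<subseteq> V" using assms by auto
  hence "f A \<le> f (A \<union> {e})" using mono unfolding monotone_set_fun_def by blast
  moreover have "B \<union> {e} = B" using True by auto
  ultimately show ?thesis unfolding marginal_def by simp
next
  case False
  have "f ((A \<union> {e}) \<union> B) + f ((A \<union> {e}) \<inter> B) \<le> f (A \<union> {e}) + f B"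
  proof -
    have "A \<union> {e} \<subseteq> V" using assms by auto
    thus ?thesis using sub assms(4) unfolding submodular_def by blast
  qed
  moreover have "(A \<union> {e}) \<union> B = B \<union> {e}" using assms by auto
  moreover have "(A \<union> {e}) \<inter> B = A" using assms False by auto
  ultimately show ?thesis unfolding marginal_def by simp
qed

lemma run_pass_inv:
  assumes mono: "monotone_set_fun V f" and sub: "submodular V f" and fin: "finite V"
  shows "set es \<subseteq> V \<Longrightarrow> S \<subseteq> V \<Longrightarrow>
    S \<subseteq> run_pass f k tau es S \<and> run_pass f k tau es S \<subseteq> V \<and>
    (card (run_pass f k tau es S) < k \<longrightarrow>
       (\<forall>e\<in>set es. e \<in> run_pass f k tau es S \<or> marginal f e (run_pass f k tau es S) < tau))"
proof (induction es arbitrary: S)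
  case Nil
  then show ?case by simp
next
  case (Cons e es)
  define S' where "S' = (if card S < k \<and> marginal f e S \<ge> tau then insert e S else S)"
  have S'V: "S' \<subseteq> V" using Cons.prems unfolding S'_def by auto
  have SS': "S \<subseteq> S'" unfolding S'_def by auto
  define T where "T = run_pass f k tau es S'"
  have IH: "S' \<subseteq> T \<and> T \<subseteq> V \<and> (card T < k \<longrightarrow> (\<forall>e\<in>set es. e \<in> T \<or> marginal f e T < tau))"
    using Cons.IH[OF _ S'V] Cons.prems unfolding T_def by auto
  have eq: "run_pass f k tau (e # es) S = T" unfolding T_def S'_def by simp
  have "card T < k \<Longrightarrow> e \<in> T \<or> marginal f e T < tau"
  proof -
    assume c: "card T < k"
    have "finite T" using IH fin finite_subset by blast
    hence "card S \<le> card T" using IH SS' card_mono by (meson order_trans)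
    hence ck: "card S < k" using c by simp
    show ?thesis
    proof (cases "marginal f e S \<ge> tau")
      case True
      then show ?thesis using ck IH unfolding S'_def by auto
    next
      case False
      have "marginal f e T \<le> marginal f e S"
        using dr[OF mono sub, of S T e] IH SS' Cons.prems by auto
      then show ?thesis using False by simp
    qed
  qed
  then show ?case unfolding eq using IH SS' by auto
qed

lemma pass_set_sub:
  assumes "\<forall>j\<in>{1..p}. distinct (ord j) \<and> set (ord j) = V"
    and mono: "monotone_set_fun V f" and sub: "submodular V f" and fin: "finite V"
  shows "j \<le> p \<Longrightarrow> pass_set f k opt p ord j \<subseteq> V"
proof (induction j)
  case 0
  then show ?case by simp
next
  case (Suc j)
  have "set (ord (Suc j)) \<subseteq> V" using assms Suc.prems by auto
  then show ?case using run_pass_inv[OF mono sub fin] Suc by simp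
qed

lemma sum_marg:
  assumes mono: "monotone_set_fun V f" and sub: "submodular V f"
    and "S \<subseteq> V"
  shows "finite Ob \<Longrightarrow> Ob \<subseteq> V \<Longrightarrow> f (Ob \<union> S) \<le> f S + (\<Sum>e\<in>Ob. marginal f e S)"
proof (induction Ob rule: finite_induct)
  case empty
  then show ?case by simp
next
  case (insert x F)
  have "marginal f x (F \<union> S) \<le> marginal f x S"
    using dr[OF mono sub, of S "F \<union> S" x] insert assms by auto
  moreover have "f (insert x F \<union> S) = f (F \<union> S) + marginal f x (F \<union> S)"
    unfolding marginal_def by (simp add: insert_commute)
  ultimately show ?case using insert by simp
qed

theorem mainTheorem17:
  fixes V :: "'a set" and f :: "'a set \<Rightarrow> real" and k p :: nat
    and ord :: "nat \<Rightarrow> 'a list"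
  assumes "finite V"
    and "\<forall>S\<subseteq>V. f S \<ge> 0"
    and "monotone_set_fun V f" and "submodular V f" and "normalized f"
    and "0 < k" and "k \<le> card V"
    and "1 \<le> p"
    and "\<forall>j\<in>{1..p}. distinct (ord j) \<and> set (ord j) = V"
    and "1 \<le> i" and "i \<le> p"
    and "card (pass_set f k (OPT V f k) p ord i) < k"
  shows "f (pass_set f k (OPT V f k) p ord i) \<ge> (1 - (real p / (real p + 1)) ^ i) * OPT V f k"
proof -
  define opt where "opt = OPT V f k"
  define q where "q = (real p / (real p + 1)) ^ i"
  define tau where "tau = q * opt / real k"
  have finM: "finite {f S | S. S \<subseteq> V \<and> card S \<le> k}"
  proof -
    have "{f S | S. S \<subseteq> V \<and> card S \<le> k} \<subseteq> f ` Pow V" by auto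
    thus ?thesis using assms(1) finite_subset by blast
  qed
  have mem0: "f {} \<in> {f S | S. S \<subseteq> V \<and> card S \<le> k}" by auto
  have "opt \<in> {f S | S. S \<subseteq> V \<and> card S \<le> k}"
    unfolding opt_def OPT_def using finM mem0 by (intro Max_in) auto
  then obtain Ob where Ob: "Ob \<subseteq> V" "card Ob \<le> k" "f Ob = opt" by auto
  have "f {} \<le> opt" unfolding opt_def OPT_def using finM mem0 by (intro Max_ge) auto
  hence opt0: "opt \<ge> 0" using assms(5) unfolding normalized_def by simp
  have q0: "q \<ge> 0" unfolding q_def by simp
  have tau0: "tau \<ge> 0" unfolding tau_def using q0 opt0 by simp
  obtain i' where i': "i = Suc i'" using assms(10) by (cases i) auto
  define S0 where "S0 = pass_set f k opt p ord i'"
  define T where "T = pass_set f k opt p ord i"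
  have Teq: "T = run_pass f k tau (ord i) S0"
    unfolding T_def S0_def tau_def q_def i' by simp
  have S0V: "S0 \<subseteq> V" unfolding S0_def
    using pass_set_sub[OF assms(9) assms(3) assms(4) assms(1)] assms(11) i' by simp
  have ordV: "set (ord i) = V" using assms(9) assms(10) assms(11) by auto
  have cT: "card T < k" using assms(12) unfolding T_def opt_def by simp
  have TV: "T \<subseteq> V" and all: "\<forall>e\<in>V. e \<in> T \<or> marginal f e T < tau"
    using run_pass_inv[OF assms(3) assms(4) assms(1), of "ord i" S0 k tau] S0V ordV cT Teq
    by auto
  have marg: "\<forall>e\<in>V. marginal f e T \<le> tau"
  proof
    fix e assume "e \<in> V"
    then show "marginal f e T \<le> tau"
    proof (cases "e \<in> T")
      case True
      hence "T \<union> {e} = T" by auto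
      thus ?thesis unfolding marginal_def using tau0 by simp
    next
      case False
      thus ?thesis using all \<open>e \<in> V\<close> by force
    qed
  qed
  have finO: "finite Ob" using Ob(1) assms(1) finite_subset by blast
  have "opt \<le> f (Ob \<union> T)"
    using Ob assms(3) TV unfolding monotone_set_fun_def by auto
  also have "\<dots> \<le> f T + (\<Sum>e\<in>Ob. marginal f e T)"
    using sum_marg[OF assms(3) assms(4) TV finO Ob(1)] .
  also have "(\<Sum>e\<in>Ob. marginal f e T) \<le> (\<Sum>e\<in>Ob. tau)"
    using marg Ob(1) by (intro sum_mono) auto
  also have "\<dots> = real (card Ob) * tau" by simp
  also have "\<dots> \<le> real k * tau" using Ob(2) tau0 by (simp add: mult_right_mono)
  also have "real k * tau = q * opt" unfolding tau_def using assms(6) by simp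
  finally have "opt \<le> f T + q * opt" by simp
  hence "(1 - q) * opt \<le> f T" by (simp add: algebra_simps)
  thus ?thesis unfolding T_def opt_def q_def by simp
qed

end
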